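(* Let $d\ge 1$ and $0<\alpha\le 1/2$. There is a constant $C$ (depending only on $d$ and $\alpha$) such that for every positive integer $n$ there exists an $n$-point set $S\subset\mathbb{R}^d$ such that the origin lies at depth $\alpha n$ with respect to $S$, but the origin is contained in at most $$\bigl((d+1)\alpha^d-2d\alpha^{d+1}\bigr)\frac{n^{d+1}}{(d+1)!}+C\,n^{d}$$ of the $d$-simplices spanned by $S$.
   Context: A point $p$ lies at depth $m$ with respect to a finite set $S\subset\mathbb{R}^d$ if every closed halfspace containing $p$ contains at least $m$ points of $S$. A $d$-simplex spanned by $S$ is the convex hull of a $(d+1)$-element subset of $S$; the count is over $(d+1)$-element subsets of $S$ whose convex hull contains the origin. *)

theory Defs
  imports "HOL-Analysis.Analysis"
begin

definition closed_halfspace :: "'a::euclidean_space set \<Rightarrow> bool" where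
  "closed_halfspace H \<longleftrightarrow> (\<exists>a b. a \<noteq> 0 \<and> H = {x. inner a x \<le> b})"

definition at_depth :: "'a::euclidean_space \<Rightarrow> real \<Rightarrow> 'a set \<Rightarrow> bool" where
  "at_depth p m S \<longleftrightarrow> (\<forall>H. closed_halfspace H \<and> p \<in> H \<longrightarrow> real (card (S \<inter> H)) \<ge> m)"

definition simplicial_count :: "'a::euclidean_space \<Rightarrow> 'a set \<Rightarrow> nat" where
  "simplicial_count p S = card {T. T \<subseteq> S \<and> card T = DIM('a) + 1 \<and> p \<in> convex hull T}"

end

theory Submission
  imports Defs "HOL-Computational_Algebra.Polynomial"
begin


lemma vander_zero:
  fixes Q :: "nat set" and c :: "nat \<Rightarrow> real"
  assumes fin: "finite Q" and cd: "card Q \<le> d" and h: "\<forall>k<d. (\<Sum>q\<in>Q. c q * real q ^ k) = 0" and q0: "q0 \<in> Q"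
  shows "c q0 = 0"
proof -
  define P where "P = (\<Prod>q\<in>Q-{q0}. [:- real q, 1:])"
  have "degree P = (\<Sum>q\<in>Q-{q0}. degree [:- real q, 1:])"
    unfolding P_def by (rule degree_prod_eq_sum_degree) auto
  also have "\<dots> = card (Q - {q0})" by simp
  finally have dP: "degree P < d" using cd q0 fin
    by (metis card_Diff1_less dual_order.strict_trans1)
  have "(\<Sum>q\<in>Q. c q * poly P (real q)) = (\<Sum>q\<in>Q. c q * (\<Sum>i\<le>degree P. coeff P i * real q ^ i))"
    by (simp add: poly_altdef)
  also have "\<dots> = (\<Sum>i\<le>degree P. coeff P i * (\<Sum>q\<in>Q. c q * real q ^ i))"
    by (simp add: sum_distrib_left sum_distrib_right mult_ac sum.swap[of _ Q])
  also have "\<dots> = 0" using h dP by (auto intro!: sum.neutral)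
  finally have s0: "(\<Sum>q\<in>Q. c q * poly P (real q)) = 0" .
  have pz: "poly P (real q) = 0" if "q \<in> Q" "q \<noteq> q0" for q
    unfolding P_def poly_prod using that fin by (auto intro!: prod_zero)
  have "(\<Sum>q\<in>Q. c q * poly P (real q)) = c q0 * poly P (real q0)"
    using pz q0 fin by (subst sum.remove[of _ q0]) (auto intro!: sum.neutral)
  moreover have "poly P (real q0) \<noteq> 0"
    unfolding P_def poly_prod using fin by (auto simp: prod_zero_iff)
  ultimately show ?thesis using s0 by simp
qed

definition curve :: "(nat \<Rightarrow> 'a) \<Rightarrow> nat \<Rightarrow> 'a::euclidean_space" where
  "curve e t = (\<Sum>i<DIM('a). (real t)^i *\<^sub>R e i)"

lemma curve_inner:
  assumes e: "bij_betw e {..<DIM('a)} (Basis :: 'a::euclidean_space set)" and k: "k < DIM('a)"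
  shows "inner (curve e t) (e k) = real t ^ k"
proof -
  have "inner (curve e t) (e k) = (\<Sum>i<DIM('a). (real t)^i * inner (e i) (e k))"
    unfolding curve_def by (simp add: inner_sum_left)
  also have "\<dots> = (\<Sum>i<DIM('a). if i = k then (real t)^i else 0)"
  proof (rule sum.cong[OF refl])
    fix i assume i: "i \<in> {..<DIM('a)}"
    have "e i \<in> Basis" "e k \<in> Basis" using e i k by (auto simp: bij_betw_def)
    moreover have "e i = e k \<longleftrightarrow> i = k" using e i k by (auto simp: bij_betw_def inj_on_def)
    ultimately show "(real t)^i * inner (e i) (e k) = (if i = k then (real t)^i else 0)"
      by (auto simp: inner_Basis)
  qed
  also have "\<dots> = real t ^ k" using k by simp
  finally show ?thesis .
qed

lemma curve_indep:
  assumes e: "bij_betw e {..<DIM('a)} (Basis :: 'a::euclidean_space set)"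
    and fin: "finite Q" and cd: "card Q \<le> DIM('a)"
    and z: "(\<Sum>q\<in>Q. c q *\<^sub>R (curve e q :: 'a)) = 0" and q0: "q0 \<in> Q"
  shows "c q0 = 0"
proof (rule vander_zero[OF fin cd _ q0], intro allI impI)
  fix k assume k: "k < DIM('a)"
  have "0 = inner (\<Sum>q\<in>Q. c q *\<^sub>R (curve e q :: 'a)) (e k)" using z by simp
  also have "\<dots> = (\<Sum>q\<in>Q. c q * real q ^ k)"
    by (simp add: inner_sum_left curve_inner[OF e k])
  finally show "(\<Sum>q\<in>Q. c q * real q ^ k) = 0" by simp
qed


locale constr =
  fixes e :: "nat \<Rightarrow> 'a::euclidean_space" and m r :: nat
  assumes e: "bij_betw e {..<DIM('a)} (Basis :: 'a set)"
begin

definition a :: "nat \<times> int \<Rightarrow> real" where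
  "a x = (if fst x = 0 then real_of_int (snd x) / (real r + 1) else real_of_int (snd x) * real (fst x))"

definition g :: "nat \<times> int \<Rightarrow> 'a" where
  "g x = a x *\<^sub>R curve e (fst x)"

definition L :: "(nat \<times> int) set" where
  "L = ({1..m} \<times> {-1,1}) \<union> ({0} \<times> {0..<int r})"

lemma finite_L[simp]: "finite L" unfolding L_def by auto

lemma card_L: "card L = 2*m + r"
proof -
  have "card L = card ({1..m} \<times> {-1,1::int}) + card ({0::nat} \<times> {0..<int r})"
    unfolding L_def by (rule card_Un_disjoint) auto
  also have "\<dots> = 2*m + r" by (simp add: card_cartesian_product)
  finally show ?thesis .
qed

lemma g_inner: "inner (g x) (e 0) = a x"
proof -
  have "0 < DIM('a)" by simp
  then show ?thesis unfolding g_def using curve_inner[OF e, of 0] by simp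
qed

lemma a_inj: "inj_on a L"
proof (rule inj_onI)
  fix x y assume x: "x \<in> L" and y: "y \<in> L" and eq: "a x = a y"
  obtain q s where xq: "x = (q,s)" by force
  obtain q' s' where yq: "y = (q',s')" by force
  have r1: "real r + 1 > 0" by simp
  have "q = q' \<and> s = s'"
  proof (cases "q = 0")
    case True
    then have s: "0 \<le> s" "s < int r" using x xq unfolding L_def by auto
    then have "a x < 1" "0 \<le> a x" using True xq r1 by (auto simp: a_def field_simps)
    show ?thesis
    proof (cases "q' = 0")
      case True
      then show ?thesis using eq xq yq \<open>q = 0\<close> r1 by (auto simp: a_def)
    next
      case False
      then have "q' \<ge> 1" "s' = 1 \<or> s' = -1" using y yq unfolding L_def by auto
      then have "a y \<ge> 1 \<or> a y \<le> -1" using False yq by (auto simp: a_def)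
      then show ?thesis using eq \<open>a x < 1\<close> \<open>0 \<le> a x\<close> by auto
    qed
  next
    case False
    then have q1: "q \<ge> 1" "s = 1 \<or> s = -1" using x xq unfolding L_def by auto
    show ?thesis
    proof (cases "q' = 0")
      case True
      then have "0 \<le> s'" "s' < int r" using y yq unfolding L_def by auto
      then have "a y < 1" "0 \<le> a y" using True yq r1 by (auto simp: a_def field_simps)
      moreover have "a x \<ge> 1 \<or> a x \<le> -1" using q1 False xq by (auto simp: a_def)
      ultimately show ?thesis using eq by auto
    next
      case False
      then have "q' \<ge> 1" "s' = 1 \<or> s' = -1" using y yq unfolding L_def by auto
      then show ?thesis using q1 eq xq yq \<open>q \<noteq> 0\<close> False by (auto simp: a_def)
    qed
  qed
  then show "x = y" using xq yq by simp
qed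

lemma g_inj: "inj_on g L"
  using a_inj by (metis g_inner inj_on_def)



definition good :: "(nat \<times> int) set \<Rightarrow> bool" where
  "good J \<longleftrightarrow> J \<subseteq> L \<and> (0,0) \<notin> J \<and> (\<forall>q. \<not> ((q,1) \<in> J \<and> (q,-1) \<in> J)) \<and> 0 \<in> convex hull (g ` J)"

lemma conv_pull:
  assumes J: "J \<subseteq> L" and z: "0 \<in> convex hull (g ` J)"
  shows "\<exists>lam. (\<forall>j\<in>J. 0 \<le> lam j) \<and> sum lam J = 1 \<and> (\<Sum>j\<in>J. lam j *\<^sub>R g j) = 0"
proof -
  have fJ: "finite J" using J(1) finite_L by (rule finite_subset)
  have inj: "inj_on g J" using g_inj J inj_on_subset by blast
  obtain u where u: "\<forall>x\<in>g`J. 0 \<le> u x" "sum u (g`J) = 1" "(\<Sum>x\<in>g`J. u x *\<^sub>R x) = 0"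
    using z convex_hull_finite[of "g`J"] fJ by auto
  show ?thesis
    apply (rule exI[of _ "u \<circ> g"])
    using u by (simp add: sum.reindex[OF inj])
qed

lemma group:
  assumes "finite J"
  shows "(\<Sum>j\<in>J. lam j *\<^sub>R g j) = (\<Sum>q\<in>fst`J. (\<Sum>j\<in>{x\<in>J. fst x = q}. lam j * a j) *\<^sub>R curve e q)"
proof -
  have "(\<Sum>q\<in>fst`J. (\<Sum>j\<in>{x\<in>J. fst x = q}. lam j * a j) *\<^sub>R curve e q)
      = (\<Sum>q\<in>fst`J. (\<Sum>j\<in>{x\<in>J. fst x = q}. lam j *\<^sub>R g j))"
    by (rule sum.cong[OF refl]) (auto simp: scaleR_sum_left g_def intro!: sum.cong)
  also have "\<dots> = (\<Sum>j\<in>J. lam j *\<^sub>R g j)"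
    by (rule sum.group) (use assms in auto)
  finally show ?thesis by simp
qed

lemma dep_zero:
  assumes "finite Q" "card Q \<le> DIM('a)" "(\<Sum>q\<in>Q. c q *\<^sub>R (curve e q :: 'a)) = 0" "q \<in> Q"
  shows "c q = 0"
  using curve_indep[OF e assms] .

lemma a_pos0: "(0,s) \<in> L \<Longrightarrow> s \<noteq> 0 \<Longrightarrow> a (0,s) > 0"
  unfolding L_def a_def by (auto simp: field_simps)

lemma sgn_a: "x \<in> L \<Longrightarrow> sgn (a x) = sgn (real_of_int (snd x))"
  unfolding L_def a_def by (auto simp: sgn_mult)

lemma killing:
  assumes G: "good J" and lam: "\<forall>j\<in>J. 0 \<le> lam j" "sum lam J = 1"
    and mu: "\<forall>q\<in>fst`J. (\<Sum>j\<in>{x\<in>J. fst x = q}. lam j * a j) = 0"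
  shows False
proof -
  have J: "J \<subseteq> L" "(0,0) \<notin> J" "\<And>q. \<not> ((q,1) \<in> J \<and> (q,-1) \<in> J)"
    using G unfolding good_def by auto
  have fJ: "finite J" using J(1) finite_L by (rule finite_subset)
  have "lam j = 0" if j: "j \<in> J" for j
  proof -
    obtain q s where jq: "j = (q,s)" by force
    have m0: "(\<Sum>x\<in>{x\<in>J. fst x = q}. lam x * a x) = 0" using mu j jq by force
    show ?thesis
    proof (cases "q = 0")
      case True
      have pos: "\<forall>x\<in>{x\<in>J. fst x = q}. 0 \<le> lam x * a x"
      proof
        fix x assume x: "x \<in> {x\<in>J. fst x = q}"
        then obtain s' where "x = (0,s')" using True by (cases x) auto
        then have "a x > 0" using x J a_pos0[of s'] by auto
        then show "0 \<le> lam x * a x" using lam x by auto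
      qed
      have "lam j * a j = 0"
        using sum_nonneg_eq_0_iff[of "{x\<in>J. fst x = q}" "\<lambda>x. lam x * a x"] fJ pos m0 j jq by auto
      moreover have "a j > 0" using a_pos0[of s] j jq True J by auto
      ultimately show ?thesis by simp
    next
      case False
      have s: "s = 1 \<or> s = -1" using j jq J False unfolding L_def by auto
      have eqj: "x = j" if "x \<in> J" "fst x = q" for x
      proof -
        obtain q' s' where xs: "x = (q',s')" by force
        then have "q' = q" "s' = 1 \<or> s' = -1" using that J False unfolding L_def by auto
        have i1: "(q,s') \<in> J" using that xs \<open>q' = q\<close> by simp
        have i2: "(q,s) \<in> J" using j jq by simp
        have "s' = s"
        proof (rule ccontr)
          assume "s' \<noteq> s"
          then have "(s = 1 \<and> s' = -1) \<or> (s = -1 \<and> s' = 1)" using s \<open>s' = 1 \<or> s' = -1\<close> by arith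
          then show False using J(3)[of q] i1 i2 by blast
        qed
        then show "x = j" using xs jq \<open>q' = q\<close> by simp
      qed
      have "{x\<in>J. fst x = q} = {j}"
      proof
        show "{x\<in>J. fst x = q} \<subseteq> {j}" using eqj by blast
        show "{j} \<subseteq> {x\<in>J. fst x = q}" using j jq by simp
      qed
      then have "lam j * a j = 0" using m0 by simp
      moreover have "a j \<noteq> 0" using s jq False by (auto simp: a_def)
      ultimately show ?thesis by simp
    qed
  qed
  then have "sum lam J = 0" by simp
  then show False using lam by simp
qed

lemma card_ge:
  assumes G: "good J"
  shows "DIM('a) < card (fst ` J)"
proof (rule ccontr)
  assume c: "\<not> DIM('a) < card (fst ` J)"
  have J: "J \<subseteq> L" "0 \<in> convex hull (g ` J)" using G unfolding good_def by auto
  have fJ: "finite J" using J(1) finite_L by (rule finite_subset)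
  obtain lam where l: "\<forall>j\<in>J. 0 \<le> lam j" "sum lam J = 1" "(\<Sum>j\<in>J. lam j *\<^sub>R g j) = 0"
    using conv_pull[OF J] by blast
  define F where "F q = (\<Sum>j\<in>{x\<in>J. fst x = q}. lam j * a j)" for q
  have S0: "(\<Sum>q\<in>fst`J. F q *\<^sub>R curve e q) = 0"
    using l(3) group[OF fJ] by (simp add: F_def)
  have cc: "card (fst`J) \<le> DIM('a)" using c by simp
  have "\<forall>q\<in>fst`J. F q = 0" using dep_zero[OF finite_imageI[OF fJ] cc S0] by blast
  then have "\<forall>q\<in>fst`J. (\<Sum>j\<in>{x\<in>J. fst x = q}. lam j * a j) = 0" by (simp add: F_def)
  then show False using killing[OF G l(1,2)] by blast
qed


lemma mu_facts:
  assumes G: "good J" and c: "card J = DIM('a) + 1"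
  shows "inj_on fst J \<and> card (fst`J) = DIM('a)+1 \<and>
    (\<exists>mu. (\<Sum>q\<in>fst`J. mu q *\<^sub>R curve e q) = 0 \<and>
       (\<forall>q s. (q,s)\<in>J \<longrightarrow> mu q \<noteq> 0 \<and> sgn (mu q) = sgn (real_of_int s)))"
proof -
  have J: "J \<subseteq> L" "0 \<in> convex hull (g ` J)" using G unfolding good_def by auto
  have fJ: "finite J" using J(1) finite_L by (rule finite_subset)
  obtain lam where l: "\<forall>j\<in>J. 0 \<le> lam j" "sum lam J = 1" "(\<Sum>j\<in>J. lam j *\<^sub>R g j) = 0"
    using conv_pull[OF J] by blast
  define F where "F q = (\<Sum>j\<in>{x\<in>J. fst x = q}. lam j * a j)" for q
  have S0: "(\<Sum>q\<in>fst`J. F q *\<^sub>R curve e q) = 0"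
    using l(3) group[OF fJ] by (simp add: F_def)
  have c1: "card (fst`J) \<le> card J" by (rule card_image_le[OF fJ])
  have c2: "DIM('a) < card (fst`J)" by (rule card_ge[OF G])
  have cQ: "card (fst`J) = DIM('a)+1" using c1 c2 c by simp
  have inj: "inj_on fst J" using eq_card_imp_inj_on[OF fJ] cQ c by simp
  have Fq: "F q = lam (q,s) * a (q,s)" if "(q,s) \<in> J" for q s
  proof -
    have "{x\<in>J. fst x = q} = {(q,s)}"
    proof
      show "{x\<in>J. fst x = q} \<subseteq> {(q,s)}"
      proof
        fix x assume x: "x \<in> {x\<in>J. fst x = q}"
        then have "x = (q,s)" using inj_onD[OF inj, of x "(q,s)"] that by auto
        then show "x \<in> {(q,s)}" by simp
      qed
      show "{(q,s)} \<subseteq> {x\<in>J. fst x = q}" using that by simp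
    qed
    then show ?thesis by (simp add: F_def)
  qed
  have Fnz: "F q1 \<noteq> 0" if q1: "q1 \<in> fst`J" for q1
  proof
    assume F0: "F q1 = 0"
    have fQ: "finite (fst`J)" using fJ by simp
    have "(\<Sum>q\<in>fst`J. F q *\<^sub>R curve e q) = F q1 *\<^sub>R curve e q1 + (\<Sum>q\<in>fst`J - {q1}. F q *\<^sub>R curve e q)"
      by (rule sum.remove[OF fQ q1])
    then have S1: "(\<Sum>q\<in>fst`J - {q1}. F q *\<^sub>R curve e q) = 0" using S0 F0 by simp
    have "card (fst`J - {q1}) \<le> DIM('a)" using cQ q1 fQ by simp
    then have "\<forall>q\<in>fst`J - {q1}. F q = 0" using dep_zero[OF _ _ S1] fQ by blast
    then have "\<forall>q\<in>fst`J. F q = 0" using F0 by blast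
    then show False using killing[OF G l(1,2)] by (simp add: F_def)
  qed
  have "(q,s)\<in>J \<longrightarrow> F q \<noteq> 0 \<and> sgn (F q) = sgn (real_of_int s)" for q s
  proof
    assume qs: "(q,s) \<in> J"
    have nz: "F q \<noteq> 0" using Fnz qs by force
    have lp: "lam (q,s) > 0" using nz Fq[OF qs] l(1) qs by force
    have "sgn (F q) = sgn (lam (q,s)) * sgn (a (q,s))" using Fq[OF qs] by (simp add: sgn_mult)
    also have "\<dots> = sgn (real_of_int s)" using lp sgn_a[of "(q,s)"] qs J(1) by auto
    finally show "F q \<noteq> 0 \<and> sgn (F q) = sgn (real_of_int s)" using nz by simp
  qed
  then show ?thesis using inj cQ S0 by blast
qed

lemma sgn_of_int: "sgn (real_of_int s) = real_of_int (sgn s)"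
  by (simp add: sgn_if)

lemma sign_lemma:
  assumes G: "good J" "good J'" and c: "card J = DIM('a) + 1" "card J' = DIM('a) + 1"
    and Q: "fst`J = fst`J'" and q0: "(q0,s0) \<in> J" "(q0,s0') \<in> J'" and sg: "sgn s0 = sgn s0'"
    and qs: "(q,s) \<in> J" "(q,s') \<in> J'"
  shows "sgn s = sgn s'"
proof -
  obtain mu where mu: "(\<Sum>q\<in>fst`J. mu q *\<^sub>R curve e q) = 0"
       "\<forall>q s. (q,s)\<in>J \<longrightarrow> mu q \<noteq> 0 \<and> sgn (mu q) = sgn (real_of_int s)"
    and cQ: "card (fst`J) = DIM('a)+1"
    using mu_facts[OF G(1) c(1)] by blast
  obtain mu' where mu': "(\<Sum>q\<in>fst`J. mu' q *\<^sub>R curve e q) = 0"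
       "\<forall>q s. (q,s)\<in>J' \<longrightarrow> mu' q \<noteq> 0 \<and> sgn (mu' q) = sgn (real_of_int s)"
    using mu_facts[OF G(2) c(2)] Q by auto
  have fJ: "finite J" using G(1) finite_L finite_subset unfolding good_def by blast
  have fQ: "finite (fst`J)" using fJ by simp
  define nu where "nu q = mu' q0 * mu q - mu q0 * mu' q" for q
  have "(\<Sum>q\<in>fst`J. nu q *\<^sub>R curve e q)
      = mu' q0 *\<^sub>R (\<Sum>q\<in>fst`J. mu q *\<^sub>R curve e q) - mu q0 *\<^sub>R (\<Sum>q\<in>fst`J. mu' q *\<^sub>R curve e q)"
    by (simp add: nu_def scaleR_sum_right sum_subtractf algebra_simps)
  then have N0: "(\<Sum>q\<in>fst`J. nu q *\<^sub>R curve e q) = 0" using mu(1) mu'(1) by simp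
  have q0Q: "q0 \<in> fst`J" using q0(1) by force
  have "(\<Sum>q\<in>fst`J. nu q *\<^sub>R curve e q) = nu q0 *\<^sub>R curve e q0 + (\<Sum>q\<in>fst`J - {q0}. nu q *\<^sub>R curve e q)"
    by (rule sum.remove[OF fQ q0Q])
  then have N1: "(\<Sum>q\<in>fst`J - {q0}. nu q *\<^sub>R curve e q) = 0" using N0 by (simp add: nu_def)
  have "card (fst`J - {q0}) \<le> DIM('a)" using cQ q0Q fQ by simp
  then have "\<forall>q\<in>fst`J - {q0}. nu q = 0" using dep_zero[OF _ _ N1] fQ by blast
  then have "\<forall>q\<in>fst`J. nu q = 0" by (auto simp: nu_def)
  then have eq: "mu' q0 * mu q = mu q0 * mu' q" using qs(1) by (force simp: nu_def)
  have "sgn (mu' q0) * sgn (mu q) = sgn (mu q0) * sgn (mu' q)"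
    using arg_cong[OF eq, of sgn] by (simp add: sgn_mult)
  moreover have "sgn (mu' q0) = sgn (mu q0)" "mu q0 \<noteq> 0"
    using mu(2) mu'(2) q0 sg by (auto simp: sgn_of_int)
  ultimately have "sgn (mu q) = sgn (mu' q)" by (simp add: sgn_zero_iff)
  then show ?thesis using mu(2) mu'(2) qs by (simp add: sgn_of_int)
qed


definition GS where "GS = {J. good J \<and> card J = DIM('a) + 1}"

definition fk :: "(nat \<times> int) set \<Rightarrow> nat set \<times> int" where
  "fk J = (fst`J, THE s. (Min (fst`J), s) \<in> J)"

lemma GS_basic:
  assumes "J \<in> GS"
  shows "finite J" "J \<subseteq> L" "inj_on fst J" "fst`J \<noteq> {}" "(Min (fst`J), snd (fk J)) \<in> J"
proof -
  have G: "good J" and c: "card J = DIM('a)+1" using assms unfolding GS_def by auto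
  show J: "J \<subseteq> L" using G unfolding good_def by auto
  show fJ: "finite J" using J finite_L by (rule finite_subset)
  show inj: "inj_on fst J" using mu_facts[OF G c] by blast
  have "J \<noteq> {}" using c by auto
  then show ne: "fst`J \<noteq> {}" by simp
  have "Min (fst`J) \<in> fst`J" using ne fJ by simp
  then obtain s where s: "(Min (fst`J), s) \<in> J" by force
  have "(THE s. (Min (fst`J), s) \<in> J) = s"
  proof (rule the_equality)
    show "(Min (fst`J), s) \<in> J" by (rule s)
    fix s' assume "(Min (fst`J), s') \<in> J"
    then show "s' = s" using inj_onD[OF inj _ s] by force
  qed
  then show "(Min (fst`J), snd (fk J)) \<in> J" using s by (simp add: fk_def)
qed

lemma L_pos: "(q,s) \<in> L \<Longrightarrow> q \<noteq> 0 \<Longrightarrow> s = 1 \<or> s = -1"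
  unfolding L_def by auto

lemma fk_inj: "inj_on fk GS"
proof -
  have sub: "J \<subseteq> J'" if J: "J \<in> GS" and J': "J' \<in> GS" and eq: "fk J = fk J'" for J J'
  proof
    fix x assume x: "x \<in> J"
    obtain q s where xs: "x = (q,s)" by force
    have Q: "fst`J = fst`J'" using eq by (simp add: fk_def)
    have s0: "snd (fk J) = snd (fk J')" using eq by simp
    have m: "(Min (fst`J), snd (fk J)) \<in> J" "(Min (fst`J), snd (fk J)) \<in> J'"
      using GS_basic(5)[OF J] GS_basic(5)[OF J'] Q s0 by auto
    have "q \<in> fst`J'" using x xs Q by force
    then obtain s' where s': "(q,s') \<in> J'" by force
    have G: "good J" "good J'" "card J = DIM('a)+1" "card J' = DIM('a)+1"
      using J J' unfolding GS_def by auto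
    have sg: "sgn s = sgn s'"
      by (rule sign_lemma[OF G(1,2) G(3,4) Q m(1) m(2) refl]) (use x xs s' in auto)
    have "s = s'"
    proof (cases "q = 0")
      case False
      then have "s = 1 \<or> s = -1" "s' = 1 \<or> s' = -1"
        using L_pos[of q s] L_pos[of q s'] x xs s' GS_basic(2)[OF J] GS_basic(2)[OF J'] by auto
      then show ?thesis using sg by auto
    next
      case True
      have fin: "finite (fst`J)" using GS_basic(1)[OF J] by simp
      have "0 \<in> fst`J" using x xs True by force
      then have "Min (fst`J) = 0" using Min_le[OF fin] by fastforce
      then have a1: "(0, snd (fk J)) \<in> J" "(0, snd (fk J)) \<in> J'" using m by auto
      have "s = snd (fk J)" using inj_onD[OF GS_basic(3)[OF J] _ x[unfolded xs] a1(1)] True by simp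
      moreover have "s' = snd (fk J)" using inj_onD[OF GS_basic(3)[OF J'] _ s' a1(2)] True by simp
      ultimately show ?thesis by simp
    qed
    then show "x \<in> J'" using s' xs by simp
  qed
  show ?thesis
    by (rule inj_onI) (metis sub subset_antisym)
qed

definition R1 where "R1 = {Q. Q \<subseteq> {1..m} \<and> card Q = DIM('a)+1} \<times> {-1,1::int}"
definition R2 where "R2 = (\<lambda>(Q,s). (insert (0::nat) Q, s)) ` ({Q. Q \<subseteq> {1..m} \<and> card Q = DIM('a)} \<times> {1..<int r})"

lemma fk_range: "fk ` GS \<subseteq> R1 \<union> R2"
proof
  fix y assume "y \<in> fk ` GS"
  then obtain J where J: "J \<in> GS" and y: "y = fk J" by blast
  have JL: "J \<subseteq> L" using GS_basic(2)[OF J] .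
  have c: "card J = DIM('a)+1" and G: "good J" using J unfolding GS_def by auto
  have z: "(0,0) \<notin> J" using G unfolding good_def by auto
  have fin: "finite (fst`J)" using GS_basic(1)[OF J] by simp
  have cQ: "card (fst`J) = DIM('a)+1" using card_image[OF GS_basic(3)[OF J]] c by simp
  have Qsub: "fst`J \<subseteq> {0..m}" using JL unfolding L_def by auto
  have m: "(Min (fst`J), snd (fk J)) \<in> J" by (rule GS_basic(5)[OF J])
  show "y \<in> R1 \<union> R2"
  proof (cases "0 \<in> fst`J")
    case False
    then have Q1: "fst`J \<subseteq> {1..m}" using Qsub by force
    have "Min (fst`J) \<in> fst`J" using fin GS_basic(4)[OF J] by simp
    then have "Min (fst`J) \<noteq> 0" using False by metis
    then have "snd (fk J) = 1 \<or> snd (fk J) = -1" using L_pos m JL by blast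
    then show ?thesis using Q1 cQ y unfolding R1_def by (auto simp: fk_def)
  next
    case True
    then have "Min (fst`J) = 0" using Min_le[OF fin] by fastforce
    then have m0: "(0, snd (fk J)) \<in> J" using m by simp
    then have "snd (fk J) \<noteq> 0" using z by (metis)
    moreover have "0 \<le> snd (fk J) \<and> snd (fk J) < int r" using m0 JL unfolding L_def by auto
    ultimately have s: "snd (fk J) \<in> {1..<int r}" by simp
    have Q1: "fst`J - {0} \<subseteq> {1..m}" using Qsub by force
    have c1: "card (fst`J - {0}) = DIM('a)" using cQ True fin by simp
    have "fk J = (insert 0 (fst`J - {0}), snd (fk J))" using True by (simp add: fk_def insert_absorb)
    moreover have "(fst`J - {0}, snd (fk J)) \<in> {Q. Q \<subseteq> {1..m} \<and> card Q = DIM('a)} \<times> {1..<int r}"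
      using Q1 c1 s by simp
    ultimately have "fk J \<in> R2" unfolding R2_def by (metis (no_types, lifting) case_prod_conv image_eqI)
    then show ?thesis using y by simp
  qed
qed

lemma card_GS: "card GS \<le> 2 * (m choose (DIM('a)+1)) + (m choose DIM('a)) * r"
proof -
  have fR1: "finite R1" unfolding R1_def by auto
  have fR2: "finite R2" unfolding R2_def by auto
  have "card GS = card (fk ` GS)" using card_image[OF fk_inj] by simp
  also have "\<dots> \<le> card (R1 \<union> R2)" by (rule card_mono) (use fR1 fR2 fk_range in auto)
  also have "\<dots> \<le> card R1 + card R2" by (rule card_Un_le)
  also have "card R1 = (m choose (DIM('a)+1)) * 2"
    unfolding R1_def card_cartesian_product using n_subsets[of "{1..m}"] by simp
  also have "card R2 \<le> card ({Q. Q \<subseteq> {1..m} \<and> card Q = DIM('a)} \<times> {1..<int r})"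
    unfolding R2_def by (rule card_image_le) auto
  also have "\<dots> = (m choose DIM('a)) * card {1..<int r}"
    unfolding card_cartesian_product using n_subsets[of "{1..m}"] by simp
  also have "\<dots> \<le> (m choose DIM('a)) * r" by (simp add: nat_le_iff)
  finally show ?thesis by simp
qed


lemma choose_le_pow: "(N choose k) \<le> N ^ k"
  by (cases "k \<le> N") (auto simp: binomial_le_pow binomial_eq_0)

definition AllJ where "AllJ = {J. J \<subseteq> L \<and> card J = DIM('a)+1 \<and> 0 \<in> convex hull (g`J)}"
definition AS where "AS = {J. J \<subseteq> L \<and> card J = DIM('a)+1 \<and> (0,0) \<in> J}"
definition Bq where "Bq q = {J. J \<subseteq> L \<and> card J = DIM('a)+1 \<and> (q,1) \<in> J \<and> (q,-1) \<in> J}"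

lemma simpl_eq: "simplicial_count 0 (g`L) = card AllJ"
proof -
  have "{T. T \<subseteq> g`L \<and> card T = DIM('a) + 1 \<and> 0 \<in> convex hull T} = image g ` AllJ"
  proof
    show "{T. T \<subseteq> g`L \<and> card T = DIM('a) + 1 \<and> 0 \<in> convex hull T} \<subseteq> image g ` AllJ"
    proof
      fix T assume T: "T \<in> {T. T \<subseteq> g`L \<and> card T = DIM('a) + 1 \<and> 0 \<in> convex hull T}"
      then have TL: "T \<subseteq> g`L" by simp
      obtain J where J: "J \<subseteq> L" "T = g`J" by (rule subset_imageE[OF TL])
      have "card (g`J) = card J" by (rule card_image[OF inj_on_subset[OF g_inj J(1)]])
      then have "J \<in> AllJ" using J T unfolding AllJ_def by simp
      then show "T \<in> image g ` AllJ" using J(2) by (rule rev_image_eqI)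
    qed
    show "image g ` AllJ \<subseteq> {T. T \<subseteq> g`L \<and> card T = DIM('a) + 1 \<and> 0 \<in> convex hull T}"
    proof
      fix T assume "T \<in> image g ` AllJ"
      then obtain J where J: "J \<in> AllJ" "T = g`J" by blast
      have JL: "J \<subseteq> L" using J(1) unfolding AllJ_def by simp
      have "card (g`J) = card J" by (rule card_image[OF inj_on_subset[OF g_inj JL]])
      then show "T \<in> {T. T \<subseteq> g`L \<and> card T = DIM('a) + 1 \<and> 0 \<in> convex hull T}"
        using J JL unfolding AllJ_def by auto
    qed
  qed
  moreover have "inj_on (image g) AllJ"
    using inj_on_image_Pow[OF g_inj] by (rule inj_on_subset) (auto simp: AllJ_def)
  ultimately show ?thesis unfolding simplicial_count_def using card_image by metis
qed

lemma AllJ_sub: "AllJ \<subseteq> GS \<union> AS \<union> (\<Union>q\<in>{1..m}. Bq q)"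
proof
  fix J assume J: "J \<in> AllJ"
  show "J \<in> GS \<union> AS \<union> (\<Union>q\<in>{1..m}. Bq q)"
  proof (cases "(0,0) \<in> J \<or> (\<exists>q. (q,1) \<in> J \<and> (q,-1) \<in> J)")
    case True
    then show ?thesis
    proof
      assume "(0,0) \<in> J" then show ?thesis using J unfolding AllJ_def AS_def by auto
    next
      assume "\<exists>q. (q,1) \<in> J \<and> (q,-1) \<in> J"
      then obtain q where q: "(q,1) \<in> J" "(q,-1) \<in> J" by blast
      have JL: "J \<subseteq> L" using J unfolding AllJ_def by auto
      then have "q \<in> {1..m}" using q unfolding L_def by auto
      moreover have "J \<in> Bq q" using J q unfolding AllJ_def Bq_def by auto
      ultimately show ?thesis by blast
    qed
  next
    case False
    then have "good J" using J unfolding AllJ_def good_def by auto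
    then show ?thesis using J unfolding AllJ_def GS_def by auto
  qed
qed

lemma card_AS: "card AS \<le> (2*m+r) ^ DIM('a)"
proof -
  have "inj_on (\<lambda>J. J - {(0,0)}) AS"
  proof (rule inj_onI)
    fix J J' assume J: "J \<in> AS" "J' \<in> AS" "J - {(0,0)} = J' - {(0,0)}"
    have "J = insert (0,0) (J - {(0,0)})" using J(1) unfolding AS_def by blast
    also have "\<dots> = J'" using J(2,3) unfolding AS_def by blast
    finally show "J = J'" .
  qed
  then have "card AS = card ((\<lambda>J. J - {(0,0)}) ` AS)" by (simp add: card_image)
  also have "\<dots> \<le> card {K. K \<subseteq> L \<and> card K = DIM('a)}"
  proof (rule card_mono)
    show "finite {K. K \<subseteq> L \<and> card K = DIM('a)}" by (rule finite_subset[of _ "Pow L"]) auto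
    show "(\<lambda>J. J - {(0,0)}) ` AS \<subseteq> {K. K \<subseteq> L \<and> card K = DIM('a)}"
    proof
      fix K assume "K \<in> (\<lambda>J. J - {(0,0)}) ` AS"
      then obtain J where J: "J \<in> AS" "K = J - {(0,0)}" by blast
      have fJ: "finite J" using J finite_subset[OF _ finite_L] unfolding AS_def by auto
      then show "K \<in> {K. K \<subseteq> L \<and> card K = DIM('a)}" using J unfolding AS_def by auto
    qed
  qed
  also have "\<dots> = (2*m+r) choose DIM('a)" using n_subsets[OF finite_L] card_L by simp
  also have "\<dots> \<le> (2*m+r) ^ DIM('a)" by (rule choose_le_pow)
  finally show ?thesis .
qed

lemma card_Bq: "card (Bq q) \<le> (2*m+r) ^ (DIM('a) - 1)"
proof -
  have "inj_on (\<lambda>J. J - {(q,1),(q,-1)}) (Bq q)"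
  proof (rule inj_onI)
    fix J J' assume J: "J \<in> Bq q" "J' \<in> Bq q" "J - {(q,1),(q,-1)} = J' - {(q,1),(q,-1)}"
    have "J = insert (q,1) (insert (q,-1) (J - {(q,1),(q,-1)}))" using J(1) unfolding Bq_def by blast
    also have "\<dots> = insert (q,1) (insert (q,-1) (J' - {(q,1),(q,-1)}))" using J(3) by simp
    also have "\<dots> = J'" using J(2) unfolding Bq_def by blast
    finally show "J = J'" .
  qed
  then have "card (Bq q) = card ((\<lambda>J. J - {(q,1),(q,-1)}) ` Bq q)" by (simp add: card_image)
  also have "\<dots> \<le> card {K. K \<subseteq> L \<and> card K = DIM('a) - 1}"
  proof (rule card_mono)
    show "finite {K. K \<subseteq> L \<and> card K = DIM('a) - 1}" by (rule finite_subset[of _ "Pow L"]) auto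
    show "(\<lambda>J. J - {(q,1),(q,-1)}) ` Bq q \<subseteq> {K. K \<subseteq> L \<and> card K = DIM('a) - 1}"
    proof
      fix K assume "K \<in> (\<lambda>J. J - {(q,1),(q,-1)}) ` Bq q"
      then obtain J where J: "J \<in> Bq q" "K = J - {(q,1),(q,-1)}" by blast
      have fJ: "finite J" using J finite_subset[OF _ finite_L] unfolding Bq_def by auto
      have "{(q,1),(q,-1::int)} \<subseteq> J" using J unfolding Bq_def by auto
      then have "card K = card J - card {(q,1),(q,-1::int)}" using J(2) fJ by (simp add: card_Diff_subset)
      also have "card {(q,1),(q,-1::int)} = 2" by simp
      finally have "card K = DIM('a) - 1" using J unfolding Bq_def by simp
      then show "K \<in> {K. K \<subseteq> L \<and> card K = DIM('a) - 1}" using J unfolding Bq_def by auto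
    qed
  qed
  also have "\<dots> = (2*m+r) choose (DIM('a) - 1)" using n_subsets[OF finite_L] card_L by simp
  also have "\<dots> \<le> (2*m+r) ^ (DIM('a) - 1)" by (rule choose_le_pow)
  finally show ?thesis .
qed

lemma count_bound:
  "simplicial_count 0 (g`L) \<le> 2 * (m choose (DIM('a)+1)) + (m choose DIM('a)) * r + 2 * (2*m+r) ^ DIM('a)"
proof -
  have "card (\<Union>q\<in>{1..m}. Bq q) \<le> (\<Sum>q\<in>{1..m}. card (Bq q))" by (rule card_UN_le) simp
  also have "\<dots> \<le> (\<Sum>q\<in>{1..m}. (2*m+r) ^ (DIM('a) - 1))" by (rule sum_mono) (rule card_Bq)
  also have "\<dots> = m * (2*m+r) ^ (DIM('a) - 1)" by simp
  also have "\<dots> \<le> (2*m+r) * (2*m+r) ^ (DIM('a) - 1)" by (rule mult_le_mono1) simp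
  also have "\<dots> = (2*m+r) ^ Suc (DIM('a) - 1)" by (simp only: power_Suc)
  also have "Suc (DIM('a) - 1) = DIM('a)" by simp
  finally have cB: "card (\<Union>q\<in>{1..m}. Bq q) \<le> (2*m+r) ^ DIM('a)" .
  have "simplicial_count 0 (g`L) = card AllJ" by (rule simpl_eq)
  also have "\<dots> \<le> card (GS \<union> AS \<union> (\<Union>q\<in>{1..m}. Bq q))"
  proof (rule card_mono[OF _ AllJ_sub])
    have "GS \<union> AS \<union> (\<Union>q\<in>{1..m}. Bq q) \<subseteq> Pow L"
      unfolding GS_def good_def AS_def Bq_def by blast
    then show "finite (GS \<union> AS \<union> (\<Union>q\<in>{1..m}. Bq q))"
      by (rule finite_subset) simp
  qed
  also have "\<dots> \<le> card GS + card AS + card (\<Union>q\<in>{1..m}. Bq q)"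
  proof -
    have "card (GS \<union> AS \<union> (\<Union>q\<in>{1..m}. Bq q)) \<le> card (GS \<union> AS) + card (\<Union>q\<in>{1..m}. Bq q)"
      by (rule card_Un_le)
    moreover have "card (GS \<union> AS) \<le> card GS + card AS" by (rule card_Un_le)
    ultimately show ?thesis by linarith
  qed
  finally show ?thesis using card_GS card_AS cB by linarith
qed


lemma g_neg: "q \<noteq> 0 \<Longrightarrow> g (q,-1) = - g (q,1)"
  unfolding g_def a_def by simp

lemma depth:
  assumes H: "closed_halfspace H" and z: "0 \<in> H"
  shows "m + (if r > 0 then 1 else 0) \<le> card (g`L \<inter> H)"
proof -
  obtain c b where cb: "H = {x. inner c x \<le> b}" using H unfolding closed_halfspace_def by blast
  have b: "0 \<le> b" using z cb by simp
  define h where "h q = (if g (q,1) \<in> H then (q,1) else (q,-1::int))" for q :: nat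
  have hH: "g (h q) \<in> H" if "q \<in> {1..m}" for q
  proof (cases "g (q,1) \<in> H")
    case True then show ?thesis by (simp add: h_def)
  next
    case False
    then have "inner c (g (q,1)) > b" using cb by simp
    then have "inner c (g (q,-1)) < 0" using g_neg[of q] that b by (simp add: inner_minus_right)
    then show ?thesis using False cb b by (simp add: h_def)
  qed
  have hL: "h q \<in> L" if "q \<in> {1..m}" for q using that unfolding h_def L_def by auto
  have hinj: "inj_on h {1..m}" by (rule inj_onI) (simp add: h_def split: if_splits)
  define K where "K = h`{1..m} \<union> (if r > 0 then {(0::nat,0::int)} else {})"
  have KL: "K \<subseteq> L"
  proof -
    have "h`{1..m} \<subseteq> L" using hL by blast
    moreover have "r > 0 \<Longrightarrow> (0,0) \<in> L" unfolding L_def by simp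
    ultimately show ?thesis unfolding K_def by auto
  qed
  have fK: "finite K" unfolding K_def by simp
  have cK: "card K = m + (if r > 0 then 1 else 0)"
  proof -
    have d: "h`{1..m} \<inter> (if r > 0 then {(0::nat,0::int)} else {}) = {}"
      by (auto simp: h_def split: if_splits)
    have "card K = card (h`{1..m}) + card (if r > 0 then {(0::nat,0::int)} else {})"
      unfolding K_def by (rule card_Un_disjoint[OF _ _ d]) auto
    then show ?thesis using card_image[OF hinj] by simp
  qed
  have gK: "g`K \<subseteq> g`L \<inter> H"
  proof
    fix y assume "y \<in> g`K"
    then obtain k where k: "k \<in> K" "y = g k" by blast
    have "g k \<in> H"
    proof (cases "k \<in> h`{1..m}")
      case True then show ?thesis using hH by blast
    next
      case False
      then have "k = (0,0)" using k unfolding K_def by (auto split: if_splits)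
      then show ?thesis using z by (simp add: g_def a_def)
    qed
    then show "y \<in> g`L \<inter> H" using k KL by blast
  qed
  have "card (g`K) = card K" by (rule card_image[OF inj_on_subset[OF g_inj KL]])
  moreover have "card (g`K) \<le> card (g`L \<inter> H)" by (rule card_mono[OF _ gK]) simp
  ultimately show ?thesis using cK by simp
qed

lemma card_gL: "card (g`L) = 2*m + r"
  using card_image[OF g_inj] card_L by simp

end


lemma fchoose: "fact k * real (m choose k) \<le> real m ^ k"
proof (cases "k \<le> m")
  case True
  have "fact k * (m choose k) * fact (m-k) = (fact m :: nat)"
    using binomial_fact_lemma[OF True] by (simp add: mult_ac)
  then have "fact m div fact (m-k) = (fact k * (m choose k) :: nat)"
    by (metis fact_nonzero nonzero_mult_div_cancel_right)
  then have "(fact k * (m choose k) :: nat) \<le> m ^ k" using fact_div_fact_le_pow[OF True] by simp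
  then have "real (fact k * (m choose k)) \<le> real (m ^ k)" by (simp only: of_nat_le_iff)
  then show ?thesis by simp
next
  case False then show ?thesis by (simp add: binomial_eq_0)
qed

lemma fmono:
  fixes x y N :: real and d :: nat
  assumes d: "d \<ge> 1" and x: "0 \<le> x" "x \<le> y" and y: "2*y \<le> N"
  shows "x^d * ((d+1)*N - 2*d*x) \<le> y^d * ((d+1)*N - 2*d*y)"
proof -
  let ?f = "\<lambda>t::real. t^d * ((d+1)*N - 2*d*t)"
  have "?f x \<le> ?f y"
  proof (rule DERIV_nonneg_imp_nondecreasing[OF x(2)])
    fix t assume t: "x \<le> t" "t \<le> y"
    have D: "DERIV ?f t :> (real d * t^(d-1) * ((d+1)*N - 2*d*t) + t^d * (- 2*d))"
      by (auto intro!: derivative_eq_intros)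
    have "t^d = t * t^(d-1)" using d by (cases d) auto
    then have "real d * t^(d-1) * ((d+1)*N - 2*d*t) + t^d * (- 2*d) = real d * (real d + 1) * t^(d-1) * (N - 2*t)"
      by (simp add: algebra_simps)
    moreover have "0 \<le> real d * (real d + 1) * t^(d-1) * (N - 2*t)"
      using t x y by (intro mult_nonneg_nonneg) auto
    ultimately show "\<exists>z. DERIV ?f t :> z \<and> z \<ge> 0" using D by auto
  qed
  then show ?thesis by simp
qed



lemma arith_main:
  fixes \<alpha> N M R C1 C2 :: real and D :: nat
  assumes a: "0 < \<alpha>" "\<alpha> \<le> 1/2" and D: "D \<ge> 1"
    and M: "0 \<le> M" "M \<le> \<alpha> * N" and R: "R = N - 2*M" "0 \<le> R"
    and c1: "fact (D+1) * C1 \<le> M ^ (D+1)" and c2: "fact D * C2 \<le> M ^ D" and C2: "0 \<le> C2"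
  shows "2 * C1 + C2 * R \<le> (real (D + 1) * \<alpha> ^ D - 2 * real D * \<alpha> ^ (D + 1)) * N ^ (D + 1) / fact (D + 1)"
proof -
  have N: "0 \<le> N" using M a by (smt (verit) mult_nonneg_nonneg zero_le_mult_iff)
  have fD: "fact (D+1) = (real D + 1) * fact D" by (simp add: fact_Suc)
  have "fact (D+1) * (2 * C1 + C2 * R) = 2 * (fact (D+1) * C1) + (real D + 1) * (fact D * C2) * R"
    by (simp add: fD algebra_simps)
  also have "\<dots> \<le> 2 * M^(D+1) + (real D + 1) * M^D * R"
    using c1 c2 R(2) by (intro add_mono mult_left_mono mult_right_mono) auto
  also have "\<dots> = M^D * ((real D + 1) * N - 2 * real D * M)"
    unfolding R(1) by (simp add: algebra_simps)
  also have "\<dots> \<le> (\<alpha>*N)^D * ((real D + 1) * N - 2 * real D * (\<alpha>*N))"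
  proof -
    have y: "2*(\<alpha>*N) \<le> N" using mult_right_mono[OF a(2) N] by simp
    show ?thesis using fmono[OF D M(1) M(2) y] by (simp add: algebra_simps)
  qed
  also have "\<dots> = (real (D + 1) * \<alpha> ^ D - 2 * real D * \<alpha> ^ (D + 1)) * N ^ (D + 1)"
    by (simp add: power_mult_distrib algebra_simps)
  finally have "fact (D+1) * (2 * C1 + C2 * R) \<le> (real (D + 1) * \<alpha> ^ D - 2 * real D * \<alpha> ^ (D + 1)) * N ^ (D + 1)" .
  moreover have "(0::real) < fact (D+1)" by simp
  ultimately show ?thesis by (simp only: pos_le_divide_eq mult.commute)
qed

theorem theorem5:
  fixes \<alpha> :: real
  assumes "0 < \<alpha>" and "\<alpha> \<le> 1/2"
  shows "\<exists>C::real. \<forall>n::nat. n > 0 \<longrightarrow>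
           (\<exists>S :: 'a::euclidean_space set. finite S \<and> card S = n \<and>
              at_depth 0 (\<alpha> * real n) S \<and>
              real (simplicial_count 0 S)
                \<le> (real (DIM('a) + 1) * \<alpha> ^ DIM('a) - 2 * real DIM('a) * \<alpha> ^ (DIM('a) + 1))
                    * real n ^ (DIM('a) + 1) / fact (DIM('a) + 1)
                  + C * real n ^ DIM('a))"
proof -
  obtain e0 where e0: "bij_betw e0 {0..<card (Basis::'a set)} (Basis::'a set)"
    using ex_bij_betw_nat_finite[of "Basis :: 'a set"] by auto
  have e: "bij_betw e0 {..<DIM('a)} (Basis::'a set)" using e0 by (simp add: atLeast0LessThan)
  show ?thesis
  proof (rule exI[of _ 2], intro allI impI)
    fix n :: nat assume n: "n > 0"
    define m where "m = nat \<lfloor>\<alpha> * real n\<rfloor>"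
    have an: "0 \<le> \<alpha> * real n" using assms by simp
    have m1: "real m \<le> \<alpha> * real n" unfolding m_def using an by linarith
    have m2: "\<alpha> * real n < real m + 1" unfolding m_def using an by linarith
    have "2 * real m \<le> real n" using m1 mult_right_mono[OF assms(2), of "real n"] by simp
    then have m3: "2*m \<le> n" by linarith
    define r where "r = n - 2*m"
    have nL: "2*m + r = n" using m3 unfolding r_def by simp
    interpret C: constr e0 m r by unfold_locales (rule e)
    define S where "S = C.g ` C.L"
    have finS: "finite S" unfolding S_def by simp
    have cS: "card S = n" unfolding S_def using C.card_gL nL by simp
    have dep: "at_depth 0 (\<alpha> * real n) S"
      unfolding at_depth_def
    proof (intro allI impI)
      fix H :: "'a set" assume H: "closed_halfspace H \<and> 0 \<in> H"
      have "m + (if r > 0 then 1 else 0) \<le> card (S \<inter> H)"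
        using C.depth[of H] H unfolding S_def by blast
      then have le: "real m + (if r > 0 then 1 else 0) \<le> real (card (S \<inter> H))"
        by (metis (mono_tags, lifting) of_nat_1 of_nat_0 of_nat_add of_nat_le_iff)
      show "\<alpha> * real n \<le> real (card (S \<inter> H))"
      proof (cases "r > 0")
        case True then show ?thesis using le m2 by simp
      next
        case False
        then have "n = 2*m" using nL by simp
        then have "\<alpha> * real n \<le> real m" using mult_right_mono[OF assms(2), of "real n"] by simp
        then show ?thesis using le False by simp
      qed
    qed
    have cb: "simplicial_count 0 S \<le> 2 * (m choose (DIM('a)+1)) + (m choose DIM('a)) * r + 2 * n ^ DIM('a)"
      using C.count_bound nL unfolding S_def by simp
    then have cbr: "real (simplicial_count 0 S) \<le> 2 * real (m choose (DIM('a)+1)) + real (m choose DIM('a)) * real r + 2 * real n ^ DIM('a)"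
      by (metis (mono_tags, lifting) of_nat_add of_nat_le_iff of_nat_mult of_nat_numeral of_nat_power)
    have ar: "2 * real (m choose (DIM('a)+1)) + real (m choose DIM('a)) * real r
       \<le> (real (DIM('a) + 1) * \<alpha> ^ DIM('a) - 2 * real DIM('a) * \<alpha> ^ (DIM('a) + 1))
                    * real n ^ (DIM('a) + 1) / fact (DIM('a) + 1)"
    proof (rule arith_main[OF assms])
      show "1 \<le> DIM('a)" by (simp add: Suc_leI)
      show "0 \<le> real m" by simp
      show "real m \<le> \<alpha> * real n" by (rule m1)
      show "real r = real n - 2 * real m" using nL by linarith
      show "0 \<le> real r" by simp
      show "fact (DIM('a) + 1) * real (m choose (DIM('a) + 1)) \<le> real m ^ (DIM('a) + 1)" by (rule fchoose)
      show "fact DIM('a) * real (m choose DIM('a)) \<le> real m ^ DIM('a)" by (rule fchoose)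
      show "0 \<le> real (m choose DIM('a))" by simp
    qed
    show "\<exists>S :: 'a set. finite S \<and> card S = n \<and>
              at_depth 0 (\<alpha> * real n) S \<and>
              real (simplicial_count 0 S)
                \<le> (real (DIM('a) + 1) * \<alpha> ^ DIM('a) - 2 * real DIM('a) * \<alpha> ^ (DIM('a) + 1))
                    * real n ^ (DIM('a) + 1) / fact (DIM('a) + 1)
                  + 2 * real n ^ DIM('a)"
      using finS cS dep cbr ar by (intro exI[of _ S]) linarith
  qed
qed

end
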